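(* Let $X$ be a cohesive almost zero-dimensional space. Then $X$ is nowhere rim-$\sigma$C: no point of $X$ has a neighborhood basis consisting of sets whose boundaries are $\sigma$C-sets in $X$. In particular $X$ is nowhere rim-$\sigma$-compact (no point has a neighborhood basis of sets with $\sigma$-compact boundaries) and nowhere rational (no point has a neighborhood basis of sets with countable boundaries).
   Context: All spaces are separable and metrizable. A subset $A$ of $X$ is a C-set in $X$ if it is an intersection of clopen subsets of $X$; a $\sigma$C-set is a countable union of C-sets. $X$ is almost zero-dimensional if every point has a neighborhood basis consisting of C-sets in $X$. $X$ is cohesive if every point $x\in X$ has a neighborhood which contains no non-empty clopen subset of $X$. *)

theory Defs
  imports "HOL-Analysis.Analysis"
begin

definition nbhd_basis_with :: "'a topology \<Rightarrow> ('a set \<Rightarrow> bool) \<Rightarrow> 'a \<Rightarrow> bool" where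
  "nbhd_basis_with X P x \<longleftrightarrow>
     (\<forall>U. openin X U \<and> x \<in> U \<longrightarrow> (\<exists>N. N \<subseteq> U \<and> x \<in> X interior_of N \<and> P N))"

definition clopenin :: "'a topology \<Rightarrow> 'a set \<Rightarrow> bool" where
  "clopenin X C \<longleftrightarrow> openin X C \<and> closedin X C"

text \<open>C-set: an intersection of clopen subsets of X (the empty intersection being X itself).\<close>
definition C_set :: "'a topology \<Rightarrow> 'a set \<Rightarrow> bool" where
  "C_set X A \<longleftrightarrow> (\<exists>\<F>. (\<forall>C\<in>\<F>. clopenin X C) \<and> A = topspace X \<inter> \<Inter>\<F>)"

definition sigmaC_set :: "'a topology \<Rightarrow> 'a set \<Rightarrow> bool" where
  "sigmaC_set X A \<longleftrightarrow> (\<exists>\<F>. countable \<F> \<and> (\<forall>B\<in>\<F>. C_set X B) \<and> A = \<Union>\<F>)"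

definition sigma_compactin :: "'a topology \<Rightarrow> 'a set \<Rightarrow> bool" where
  "sigma_compactin X A \<longleftrightarrow> (\<exists>\<F>. countable \<F> \<and> (\<forall>K\<in>\<F>. compactin X K) \<and> A = \<Union>\<F>)"

definition almost_zero_dimensional :: "'a topology \<Rightarrow> bool" where
  "almost_zero_dimensional X \<longleftrightarrow> (\<forall>x\<in>topspace X. nbhd_basis_with X (C_set X) x)"

definition cohesive :: "'a topology \<Rightarrow> bool" where
  "cohesive X \<longleftrightarrow> (\<forall>x\<in>topspace X. \<exists>N. N \<subseteq> topspace X \<and> x \<in> X interior_of N \<and>
       \<not> (\<exists>C. C \<noteq> {} \<and> C \<subseteq> N \<and> clopenin X C))"

definition nowhere_rim_sigmaC :: "'a topology \<Rightarrow> bool" where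
  "nowhere_rim_sigmaC X \<longleftrightarrow>
     (\<forall>x\<in>topspace X. \<not> nbhd_basis_with X (\<lambda>N. sigmaC_set X (X frontier_of N)) x)"

definition nowhere_rim_sigma_compact :: "'a topology \<Rightarrow> bool" where
  "nowhere_rim_sigma_compact X \<longleftrightarrow>
     (\<forall>x\<in>topspace X. \<not> nbhd_basis_with X (\<lambda>N. sigma_compactin X (X frontier_of N)) x)"

definition nowhere_rational :: "'a topology \<Rightarrow> bool" where
  "nowhere_rational X \<longleftrightarrow>
     (\<forall>x\<in>topspace X. \<not> nbhd_basis_with X (\<lambda>N. countable (X frontier_of N)) x)"

end

theory Submission
  imports Defs
begin
lemma sep_metr_second_countable:
  assumes "separable_space X" "metrizable_space X"
  shows "second_countable X"
proof -
  obtain M d where md: "Metric_space M d" and X: "X = Metric_space.mtopology M d"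
    using assms(2) metrizable_space_def by blast
  interpret Metric_space M d by (rule md)
  have sX: "separable_space mtopology" using assms(1) X by simp
  obtain C where C: "countable C" "C \<subseteq> M" "mtopology closure_of C = M"
    using sX unfolding separable_space_def topspace_mtopology by blast
  define B where "B = (\<lambda>p. mball (fst p) (1 / real (Suc (snd p)))) ` (C \<times> (UNIV::nat set))"
  have "countable B" unfolding B_def using C(1) by simp
  moreover have "\<forall>V\<in>B. openin mtopology V" unfolding B_def by blast
  moreover have "\<exists>V\<in>B. x \<in> V \<and> V \<subseteq> U" if oU0: "openin mtopology U" and xU: "x \<in> U" for U x
  proof -
    have oU: "U \<subseteq> M \<and> (\<forall>x. x \<in> U \<longrightarrow> (\<exists>r>0. mball x r \<subseteq> U))"
      using oU0 unfolding openin_mtopology .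
    obtain r where r: "r > 0" "mball x r \<subseteq> U" using oU xU by blast
    obtain n where n: "inverse (real (Suc n)) < r/2" using reals_Archimedean[of "r/2"] r(1)
      by auto
    have xM: "x \<in> M" using oU xU by blast
    have "x \<in> mtopology closure_of C" using C(3) xM by simp
    then have "\<exists>y \<in> C. y \<in> mball x (1 / real (Suc n))"
      unfolding metric_closure_of by simp
    then obtain c where c: "c \<in> C" "c \<in> mball x (1 / real (Suc n))"
      by blast
    have dc: "d c x < 1 / real (Suc n)" using c(2) commute[of c x] by simp
    have "mball c (1 / real (Suc n)) \<subseteq> mball x r"
    proof (rule mball_subset)
      have n': "1 / real (Suc n) < r/2" using n by (simp add: inverse_eq_divide)
      show "d c x + 1 / real (Suc n) \<le> r" using dc n' by linarith
    qed (use xM in simp)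
    moreover have "x \<in> mball c (1 / real (Suc n))" using c xM dc commute[of c x] by simp
    moreover have "mball c (1 / real (Suc n)) \<in> B" unfolding B_def using c(1) by force
    ultimately show ?thesis using r by blast
  qed
  ultimately have "second_countable mtopology" unfolding second_countable_def by blast
  then show ?thesis using X by simp
qed

lemma C_setD:
  assumes "C_set X A" "z \<in> topspace X" "z \<notin> A"
  shows "\<exists>C. clopenin X C \<and> A \<subseteq> C \<and> z \<notin> C"
proof -
  have "\<exists>F. (\<forall>C\<in>F. clopenin X C) \<and> A = topspace X \<inter> \<Inter>F"
    using assms(1) unfolding C_set_def .
  then obtain F where F1: "\<forall>C\<in>F. clopenin X C" and F2: "A = topspace X \<inter> \<Inter>F"
    by metis
  have "z \<notin> \<Inter>F" using assms(2,3) F2 by simp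
  then obtain C where C: "C \<in> F" "z \<notin> C" by auto
  have "A \<subseteq> C" using F2 C(1) by auto
  then show ?thesis using C F1 by metis
qed

lemma C_set_subset: "C_set X A \<Longrightarrow> A \<subseteq> topspace X"
  unfolding C_set_def by auto

lemma C_setI:
  assumes "A \<subseteq> topspace X" "\<And>z. z \<in> topspace X \<Longrightarrow> z \<notin> A \<Longrightarrow> \<exists>C. clopenin X C \<and> A \<subseteq> C \<and> z \<notin> C"
  shows "C_set X A"
proof -
  let ?F = "{C. clopenin X C \<and> A \<subseteq> C}"
  have "A = topspace X \<inter> \<Inter>?F"
  proof
    show "A \<subseteq> topspace X \<inter> \<Inter>?F" using assms(1) by auto
    show "topspace X \<inter> \<Inter>?F \<subseteq> A"
    proof
      fix z assume z: "z \<in> topspace X \<inter> \<Inter>?F"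
      show "z \<in> A"
      proof (rule ccontr)
        assume "z \<notin> A"
        then obtain C where "clopenin X C" "A \<subseteq> C" "z \<notin> C" using assms(2) z by auto
        then show False using z by auto
      qed
    qed
  qed
  moreover have "\<forall>C\<in>?F. clopenin X C" by auto
  ultimately show ?thesis unfolding C_set_def by metis
qed

lemma clopenin_compl: "clopenin X C \<Longrightarrow> clopenin X (topspace X - C)"
  by (auto simp: clopenin_def openin_diff closedin_diff)

lemma clopen_sep_point:
  assumes azd: "almost_zero_dimensional X" and t1: "t1_space X"
    and x: "x \<in> topspace X" and y: "y \<in> topspace X" and xy: "x \<noteq> y"
  shows "\<exists>C. clopenin X C \<and> x \<in> C \<and> y \<notin> C"
proof -
  have o: "openin X (topspace X - {y})" using closedin_t1_singleton[OF t1 y] by (simp add: closedin_def)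
  have xx: "x \<in> topspace X - {y}" using x xy by simp
  have nb: "nbhd_basis_with X (C_set X) x" using azd x unfolding almost_zero_dimensional_def by blast
  obtain N where N: "N \<subseteq> topspace X - {y}" "x \<in> X interior_of N" "C_set X N"
    using nb o xx unfolding nbhd_basis_with_def by blast
  have "y \<notin> N" using N(1) by blast
  then obtain C where C: "clopenin X C" "N \<subseteq> C" "y \<notin> C" using C_setD[OF N(3) y] by blast
  have "x \<in> N" using N(2) interior_of_subset[of X N] by blast
  then show ?thesis using C by blast
qed

lemma compact_C_set:
  assumes azd: "almost_zero_dimensional X" and t1: "t1_space X" and K: "compactin X K"
  shows "C_set X K"
proof (rule C_setI)
  show KT: "K \<subseteq> topspace X" using K compactin_subset_topspace by blast
  fix y assume y: "y \<in> topspace X" and yK: "y \<notin> K"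
  let ?U = "{C. clopenin X C \<and> y \<notin> C}"
  have "K \<subseteq> \<Union>?U"
  proof
    fix k assume k: "k \<in> K"
    then have "k \<noteq> y" using yK by blast
    then obtain C where "clopenin X C" "k \<in> C" "y \<notin> C"
      using clopen_sep_point[OF azd t1, of k y] k KT y by blast
    then show "k \<in> \<Union>?U" by blast
  qed
  moreover have "\<forall>U\<in>?U. openin X U" by (simp add: clopenin_def)
  ultimately obtain G where G: "finite G" "G \<subseteq> ?U" "K \<subseteq> \<Union>G"
    using K unfolding compactin_def by meson
  have "openin X (\<Union>G)" using G(2) by (auto simp: clopenin_def)
  moreover have "closedin X (\<Union>G)" using G(1,2) by (intro closedin_Union) (auto simp: clopenin_def)
  moreover have "y \<notin> \<Union>G" using G(2) by blast
  ultimately show "\<exists>C. clopenin X C \<and> K \<subseteq> C \<and> y \<notin> C" using G(3) by (auto simp: clopenin_def)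
qed

lemma C_set_Un:
  assumes A: "C_set X A" and B: "C_set X B"
  shows "C_set X (A \<union> B)"
proof (rule C_setI)
  show "A \<union> B \<subseteq> topspace X" using C_set_subset[OF A] C_set_subset[OF B] by blast
  fix z assume z: "z \<in> topspace X" "z \<notin> A \<union> B"
  obtain C where C: "clopenin X C" "A \<subseteq> C" "z \<notin> C" using C_setD[OF A z(1)] z(2) by blast
  obtain D where D: "clopenin X D" "B \<subseteq> D" "z \<notin> D" using C_setD[OF B z(1)] z(2) by blast
  have "clopenin X (C \<union> D)" using C(1) D(1) by (auto simp: clopenin_def)
  then show "\<exists>C. clopenin X C \<and> A \<union> B \<subseteq> C \<and> z \<notin> C" using C D by blast
qed

lemma C_set_empty: "C_set X {}"
  by (rule C_setI) (auto simp: clopenin_def intro!: exI[of _ "{}"])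

lemma C_set_compl_cover:
  assumes "C_set X A" "z \<in> topspace X" "z \<notin> A"
  shows "\<exists>C. clopenin X C \<and> z \<in> C \<and> C \<inter> A = {}"
proof -
  obtain a where a: "clopenin X a" "A \<subseteq> a" "z \<notin> a" using C_setD[OF assms] by blast
  have "clopenin X (topspace X - a)" using clopenin_compl[OF a(1)] .
  moreover have "z \<in> topspace X - a" using assms(2) a by blast
  moreover have "(topspace X - a) \<inter> A = {}" using a(2) by blast
  ultimately show ?thesis by blast
qed

lemma clopen_sep_Csets:
  assumes L: "Lindelof_space X" and A: "C_set X A" and K: "C_set X K" and dj: "A \<inter> K = {}"
  shows "\<exists>D. clopenin X D \<and> A \<subseteq> D \<and> D \<inter> K = {}"
proof (cases "topspace X = {}")
  case True
  then have "A = {}" using C_set_subset[OF A] by blast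
  moreover have "clopenin X {}" by (simp add: clopenin_def)
  ultimately show ?thesis by blast
next
  case False
  let ?U = "{C. clopenin X C \<and> (C \<inter> A = {} \<or> C \<inter> K = {})}"
  have cov: "topspace X \<subseteq> \<Union>?U"
  proof
    fix z assume z: "z \<in> topspace X"
    show "z \<in> \<Union>?U"
    proof (cases "z \<in> A")
      case False
      then obtain C where "clopenin X C" "z \<in> C" "C \<inter> A = {}"
        using C_set_compl_cover[OF A z] by blast
      then show ?thesis by blast
    next
      case True
      then have "z \<notin> K" using dj by blast
      then obtain C where "clopenin X C" "z \<in> C" "C \<inter> K = {}"
        using C_set_compl_cover[OF K z] by blast
      then show ?thesis by blast
    qed
  qed
  have "\<forall>U\<in>?U. openin X U" by (simp add: clopenin_def)
  then obtain V where V: "countable V" "V \<subseteq> ?U" "topspace X \<subseteq> \<Union>V"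
    using L cov unfolding Lindelof_space_alt by meson
  have Vne: "V \<noteq> {}" using V(3) False by blast
  define c where "c = from_nat_into V"
  have cV: "c n \<in> V" for n unfolding c_def using Vne by (rule from_nat_into)
  have cU: "clopenin X (c n) \<and> (c n \<inter> A = {} \<or> c n \<inter> K = {})" for n using cV V(2) by blast
  have cT: "c n \<subseteq> topspace X" for n using cU[of n] by (simp add: clopenin_def openin_subset)
  have ex: "\<exists>n. z \<in> c n" if zT: "z \<in> topspace X" for z
  proof -
    obtain v where "v \<in> V" "z \<in> v" using V(3) zT by blast
    moreover have "range c = V" unfolding c_def using Vne V(1) by simp
    ultimately show ?thesis by (metis imageE)
  qed
  define \<mu> where "\<mu> z = (LEAST n. z \<in> c n)" for z
  have mu1: "z \<in> c (\<mu> z)" if "z \<in> topspace X" for z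
    unfolding \<mu>_def using ex[OF that] by (rule LeastI_ex)
  have mu2: "z \<notin> c n" if "n < \<mu> z" for z n
    using that unfolding \<mu>_def by (rule not_less_Least)
  define G where "G z = c (\<mu> z) - \<Union> (c ` {..<\<mu> z})" for z
  have Gopen: "openin X (G z)" for z
  proof -
    have "closedin X (\<Union> (c ` {..<\<mu> z}))"
      by (rule closedin_Union) (use cU in \<open>auto simp: clopenin_def\<close>)
    then show ?thesis unfolding G_def using cU[of "\<mu> z"] by (simp add: clopenin_def openin_diff)
  qed
  have Gz: "z \<in> G z" if "z \<in> topspace X" for z
    unfolding G_def using mu1[OF that] mu2[of _ z] by blast
  have Gmu: "\<mu> w = \<mu> z" if "w \<in> G z" for z w
  proof -
    have w1: "w \<in> c (\<mu> z)" and w2: "\<And>n. n < \<mu> z \<Longrightarrow> w \<notin> c n" using that unfolding G_def by auto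
    show ?thesis unfolding \<mu>_def[of w]
    proof (rule Least_equality)
      show "w \<in> c (\<mu> z)" by (rule w1)
      show "\<mu> z \<le> y" if "w \<in> c y" for y using w2[of y] that by (meson not_le)
    qed
  qed
  have GT: "G z \<subseteq> topspace X" for z unfolding G_def using cT[of "\<mu> z"] by (rule subset_trans[rotated]) auto
  define D where "D = {z \<in> topspace X. c (\<mu> z) \<inter> K = {}}"
  have oD: "openin X D"
  proof (subst openin_subopen, intro ballI)
    fix z assume z: "z \<in> D"
    have zT: "z \<in> topspace X" and zK: "c (\<mu> z) \<inter> K = {}" using z unfolding D_def by simp_all
    have "G z \<subseteq> D"
    proof
      fix w assume w: "w \<in> G z"
      have mw: "\<mu> w = \<mu> z" using w by (rule Gmu)
      have wT: "w \<in> topspace X" using w GT[of z] by (rule subsetD[rotated])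
      show "w \<in> D" unfolding D_def using wT zK mw by simp
    qed
    then show "\<exists>T. openin X T \<and> z \<in> T \<and> T \<subseteq> D"
      using Gopen[of z] Gz[OF zT] by (intro exI[of _ "G z"]) simp
  qed
  have oD': "openin X (topspace X - D)"
  proof (subst openin_subopen, intro ballI)
    fix z assume z: "z \<in> topspace X - D"
    have zT: "z \<in> topspace X" and zK: "c (\<mu> z) \<inter> K \<noteq> {}" using z unfolding D_def by simp_all
    have "G z \<subseteq> topspace X - D"
    proof
      fix w assume w: "w \<in> G z"
      have mw: "\<mu> w = \<mu> z" using w by (rule Gmu)
      have wT: "w \<in> topspace X" using w GT[of z] by (rule subsetD[rotated])
      show "w \<in> topspace X - D" unfolding D_def using wT zK mw by simp
    qed
    then show "\<exists>T. openin X T \<and> z \<in> T \<and> T \<subseteq> topspace X - D"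
      using Gopen[of z] Gz[OF zT] by (intro exI[of _ "G z"]) simp
  qed
  have "clopenin X D" unfolding clopenin_def closedin_def using oD oD' by (simp add: D_def)
  moreover have "A \<subseteq> D"
  proof
    fix z assume z: "z \<in> A"
    then have zT: "z \<in> topspace X" using C_set_subset[OF A] by blast
    have "c (\<mu> z) \<inter> A \<noteq> {}" using mu1[OF zT] z by blast
    then have "c (\<mu> z) \<inter> K = {}" using cU[of "\<mu> z"] by blast
    then show "z \<in> D" unfolding D_def using zT by blast
  qed
  moreover have "D \<inter> K = {}"
  proof (rule ccontr)
    assume "D \<inter> K \<noteq> {}"
    then obtain z where z: "z \<in> D" "z \<in> K" by blast
    then have zT: "z \<in> topspace X" unfolding D_def by blast
    have "z \<in> c (\<mu> z) \<inter> K" using mu1[OF zT] z(2) by blast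
    then show False using z(1) unfolding D_def by blast
  qed
  ultimately show ?thesis by blast
qed

lemma main_contra:
  assumes SC: "second_countable X" and azd: "almost_zero_dimensional X" and coh: "cohesive X"
    and x: "x \<in> topspace X" and nb: "nbhd_basis_with X (\<lambda>N. sigmaC_set X (X frontier_of N)) x"
  shows False
proof -
  have Lind: "Lindelof_space X" using SC by (rule second_countable_imp_Lindelof_space)
  obtain N0 where N0: "N0 \<subseteq> topspace X" "x \<in> X interior_of N0"
      "\<not> (\<exists>C. C \<noteq> {} \<and> C \<subseteq> N0 \<and> clopenin X C)"
    using coh x unfolding cohesive_def by blast
  have "openin X (X interior_of N0)" by simp
  then obtain W where W: "W \<subseteq> X interior_of N0" "x \<in> X interior_of W"
      "sigmaC_set X (X frontier_of W)"
    using nb N0(2) unfolding nbhd_basis_with_def by blast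
  define U where "U = X interior_of W"
  have oU: "openin X U" unfolding U_def by simp
  have xU: "x \<in> U" unfolding U_def by (rule W(2))
  have UW: "U \<subseteq> W" unfolding U_def by (rule interior_of_subset)
  have UN0: "U \<subseteq> N0" using UW W(1) interior_of_subset[of X N0] by blast
  have UT: "U \<subseteq> topspace X" using oU by (rule openin_subset)
  have "\<exists>\<F>. countable \<F> \<and> (\<forall>B\<in>\<F>. C_set X B) \<and> X frontier_of W = \<Union>\<F>"
    using W(3) unfolding sigmaC_set_def .
  then obtain \<F> where F1: "countable \<F>" and F2: "\<forall>B\<in>\<F>. C_set X B"
      and F3: "X frontier_of W = \<Union>\<F>"
    by metis
  define A where "A = from_nat_into (insert {} \<F>)"
  have Ain: "A n \<in> insert {} \<F>" for n unfolding A_def by (rule from_nat_into) simp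
  have rA: "range A = insert {} \<F>" unfolding A_def using F1 by simp
  have AC: "C_set X (A n)" for n
  proof (cases "A n = {}")
    case True then show ?thesis by (simp add: C_set_empty)
  next
    case False then have "A n \<in> \<F>" using Ain[of n] by simp
    then show ?thesis using F2 by simp
  qed
  have Fr: "X frontier_of W \<subseteq> (\<Union>n. A n)"
  proof
    fix z assume "z \<in> X frontier_of W"
    then obtain Bb where Bb: "Bb \<in> \<F>" "z \<in> Bb" using F3 by auto
    then have "Bb \<in> range A" using rA by simp
    then show "z \<in> (\<Union>n. A n)" using Bb(2) by auto
  qed
  have FrU: "X frontier_of W \<inter> U = {}" unfolding U_def frontier_of_def by auto
  have AU: "A n \<inter> U = {}" for n
  proof -
    have "A n \<subseteq> X frontier_of W" using Ain[of n] F3 by auto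
    then show ?thesis using FrU by auto
  qed
  have nbx: "nbhd_basis_with X (C_set X) x" using azd x unfolding almost_zero_dimensional_def by blast
  obtain L0 where L0: "L0 \<subseteq> U" "x \<in> X interior_of L0" "C_set X L0"
    using nbx oU xU unfolding nbhd_basis_with_def by blast
  let ?L = "{L. C_set X L \<and> L \<subseteq> U}"
  have LU: "Lindelof_space (subtopology X U)"
    using second_countable_subtopology[OF SC] by (rule second_countable_imp_Lindelof_space)
  have covU: "U \<subseteq> \<Union> ((\<lambda>L. X interior_of L) ` ?L)"
  proof
    fix y assume y: "y \<in> U"
    have "nbhd_basis_with X (C_set X) y" using azd y UT unfolding almost_zero_dimensional_def by blast
    then obtain L where "L \<subseteq> U" "y \<in> X interior_of L" "C_set X L"
      using oU y unfolding nbhd_basis_with_def by blast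
    then show "y \<in> \<Union> ((\<lambda>L. X interior_of L) ` ?L)" by blast
  qed
  have "\<forall>V\<in>(\<lambda>L. X interior_of L) ` ?L. openin X V" by simp
  then obtain V where V: "countable V" "V \<subseteq> (\<lambda>L. X interior_of L) ` ?L" "U \<subseteq> \<Union>V"
    using LU covU UT unfolding Lindelof_space_subtopology_subset[OF UT] by meson
  then obtain Bs where Bs: "countable Bs" "Bs \<subseteq> ?L" "V = (\<lambda>L. X interior_of L) ` Bs"
    using countable_subset_image[of V "\<lambda>L. X interior_of L" ?L] by blast
  have covB: "U \<subseteq> (\<Union>L\<in>Bs. X interior_of L)" using V(3) Bs(3) by simp
  define B where "B = from_nat_into (insert L0 Bs)"
  have Bin: "B n \<in> insert L0 Bs" for n unfolding B_def by (rule from_nat_into) simp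
  have rB: "range B = insert L0 Bs" unfolding B_def using Bs(1) by simp
  have BC: "C_set X (B n)" for n using Bin[of n] Bs(2) L0(3) by blast
  have BU: "B n \<subseteq> U" for n using Bin[of n] Bs(2) L0(1) by blast
  define K where "K n = L0 \<union> \<Union> (B ` {..n})" for n
  have KSuc: "K (Suc n) = K n \<union> B (Suc n)" for n unfolding K_def by (auto simp: atMost_Suc)
  have K0: "K 0 = L0 \<union> B 0" unfolding K_def by simp
  have KC: "C_set X (K n)" for n
  proof (induction n)
    case 0 then show ?case unfolding K0 by (intro C_set_Un L0(3) BC)
  next
    case (Suc n) then show ?case unfolding KSuc by (intro C_set_Un BC)
  qed
  have KU: "K n \<subseteq> U" for n unfolding K_def using L0(1) BU by blast
  have BK: "m \<le> n \<Longrightarrow> B m \<subseteq> K n" for m n unfolding K_def by auto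
  have L0K: "L0 \<subseteq> K n" for n unfolding K_def by auto
  have sep: "\<forall>n. \<exists>D. clopenin X D \<and> A n \<subseteq> D \<and> D \<inter> K n = {}"
  proof
    fix n
    have "A n \<inter> K n = {}" using AU[of n] KU[of n] by blast
    then show "\<exists>D. clopenin X D \<and> A n \<subseteq> D \<and> D \<inter> K n = {}"
      by (rule clopen_sep_Csets[OF Lind AC KC])
  qed
  then obtain D where D: "\<And>n. clopenin X (D n) \<and> A n \<subseteq> D n \<and> D n \<inter> K n = {}"
    by metis
  define Q where "Q = U - (\<Union>n. D n)"
  have xQ: "x \<in> Q"
  proof -
    have "x \<in> L0" using L0(2) interior_of_subset[of X L0] by blast
    then have "x \<notin> D n" for n using L0K[of n] D[of n] by blast
    then show ?thesis unfolding Q_def using xU by blast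
  qed
  have oQ: "openin X Q"
  proof (subst openin_subopen, intro ballI)
    fix q assume q: "q \<in> Q"
    then have "q \<in> U" unfolding Q_def by blast
    then obtain L where L: "L \<in> Bs" "q \<in> X interior_of L" using covB by blast
    then obtain m where m: "B m = L" using rB by (metis insertCI rangeE)
    define T where "T = (U \<inter> X interior_of (B m)) - \<Union> (D ` {..<m})"
    have "closedin X (\<Union> (D ` {..<m}))"
      by (rule closedin_Union) (use D in \<open>auto simp: clopenin_def\<close>)
    then have "openin X T" unfolding T_def using oU by (intro openin_diff openin_Int) auto
    moreover have "q \<in> T" unfolding T_def using q L m unfolding Q_def by blast
    moreover have "T \<subseteq> Q"
    proof
      fix w assume w: "w \<in> T"
      have "w \<notin> D n" for n
      proof (cases "n < m")
        case True then show ?thesis using w unfolding T_def by blast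
      next
        case False
        then have "B m \<subseteq> K n" by (intro BK) simp
        moreover have "w \<in> B m" using w interior_of_subset[of X "B m"] unfolding T_def by blast
        ultimately show ?thesis using D[of n] by blast
      qed
      then show "w \<in> Q" using w unfolding T_def Q_def by blast
    qed
    ultimately show "\<exists>T. openin X T \<and> q \<in> T \<and> T \<subseteq> Q" by blast
  qed
  have cQ: "closedin X Q"
  proof -
    have "X closure_of Q \<subseteq> Q"
    proof
      fix z assume z: "z \<in> X closure_of Q"
      have nD: "z \<notin> D n" for n
      proof
        assume zD: "z \<in> D n"
        have "openin X (D n)" using D[of n] by (simp add: clopenin_def)
        then obtain y where "y \<in> Q" "y \<in> D n" using z zD unfolding in_closure_of by blast
        then show False unfolding Q_def by blast
      qed
      have "Q \<subseteq> W" unfolding Q_def using UW by blast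
      then have zW: "z \<in> X closure_of W" using z closure_of_mono[of Q W X] by blast
      show "z \<in> Q"
      proof (cases "z \<in> U")
        case True then show ?thesis unfolding Q_def using nD by blast
      next
        case False
        then have "z \<in> X frontier_of W" using zW unfolding frontier_of_def U_def by blast
        then obtain n where "z \<in> A n" using Fr by blast
        then show ?thesis using D[of n] nD[of n] by blast
      qed
    qed
    moreover have "Q \<subseteq> topspace X" unfolding Q_def using UT by blast
    ultimately show ?thesis using closure_of_subset_eq[of Q X] by blast
  qed
  have "clopenin X Q" using oQ cQ by (simp add: clopenin_def)
  moreover have "Q \<subseteq> N0" unfolding Q_def using UN0 by blast
  moreover have "Q \<noteq> {}" using xQ by blast
  ultimately show False using N0(3) by blast
qed

lemma nbhd_basis_mono:
  assumes nb: "nbhd_basis_with X P x" and PQ: "\<And>N. P N \<Longrightarrow> Q N"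
  shows "nbhd_basis_with X Q x"
  unfolding nbhd_basis_with_def
proof (intro allI impI)
  fix U assume U: "openin X U \<and> x \<in> U"
  then obtain N where N: "N \<subseteq> U" "x \<in> X interior_of N" "P N"
    using nb unfolding nbhd_basis_with_def by meson
  show "\<exists>N. N \<subseteq> U \<and> x \<in> X interior_of N \<and> Q N"
    by (intro exI[of _ N]) (simp add: N(1,2) PQ[OF N(3)])
qed

lemma sigma_compact_sigmaC:
  assumes azd: "almost_zero_dimensional X" and t1: "t1_space X" and S: "sigma_compactin X S"
  shows "sigmaC_set X S"
proof -
  have "\<exists>\<F>. countable \<F> \<and> (\<forall>K\<in>\<F>. compactin X K) \<and> S = \<Union>\<F>"
    using S unfolding sigma_compactin_def .
  then obtain \<F> where F1: "countable \<F>" and F2: "\<forall>K\<in>\<F>. compactin X K" and F3: "S = \<Union>\<F>" by metis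
  have "\<forall>K\<in>\<F>. C_set X K"
  proof
    fix K assume "K \<in> \<F>" then have "compactin X K" using F2 by simp
    then show "C_set X K" by (rule compact_C_set[OF azd t1])
  qed
  then show ?thesis unfolding sigmaC_set_def by (intro exI[of _ \<F>]) (simp add: F1 F3)
qed

lemma countable_sigmaC:
  assumes azd: "almost_zero_dimensional X" and t1: "t1_space X"
    and S: "countable S" "S \<subseteq> topspace X"
  shows "sigmaC_set X S"
proof -
  have "\<forall>K\<in>(\<lambda>y. {y}) ` S. C_set X K"
  proof
    fix K assume "K \<in> (\<lambda>y. {y}) ` S"
    then obtain y where y: "y \<in> S" "K = {y}" by auto
    then have "compactin X K" using S(2) by auto
    then show "C_set X K" by (rule compact_C_set[OF azd t1])
  qed
  moreover have "countable ((\<lambda>y. {y}) ` S)" using S(1) by simp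
  moreover have "S = \<Union> ((\<lambda>y. {y}) ` S)" by auto
  ultimately show ?thesis unfolding sigmaC_set_def by (intro exI[of _ "(\<lambda>y. {y}) ` S"]) simp
qed

theorem corollary4p7:
  fixes X :: "'a topology"
  assumes "separable_space X" and "metrizable_space X"
    and "cohesive X" and "almost_zero_dimensional X"
  shows "nowhere_rim_sigmaC X \<and> nowhere_rim_sigma_compact X \<and> nowhere_rational X"
proof -
  have SC: "second_countable X" using assms(1,2) by (rule sep_metr_second_countable)
  have t1: "t1_space X" using assms(2) by (rule metrizable_imp_t1_space)
  have R1: "\<not> nbhd_basis_with X (\<lambda>N. sigmaC_set X (X frontier_of N)) x" if x: "x \<in> topspace X" for x
  proof
    assume "nbhd_basis_with X (\<lambda>N. sigmaC_set X (X frontier_of N)) x"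
    then show False using main_contra[OF SC assms(4) assms(3) x] by blast
  qed
  have R2: "\<not> nbhd_basis_with X (\<lambda>N. sigma_compactin X (X frontier_of N)) x" if x: "x \<in> topspace X" for x
  proof
    assume "nbhd_basis_with X (\<lambda>N. sigma_compactin X (X frontier_of N)) x"
    then have "nbhd_basis_with X (\<lambda>N. sigmaC_set X (X frontier_of N)) x"
      by (rule nbhd_basis_mono) (rule sigma_compact_sigmaC[OF assms(4) t1])
    then show False using R1[OF x] by blast
  qed
  have R3: "\<not> nbhd_basis_with X (\<lambda>N. countable (X frontier_of N)) x" if x: "x \<in> topspace X" for x
  proof
    assume "nbhd_basis_with X (\<lambda>N. countable (X frontier_of N)) x"
    then have "nbhd_basis_with X (\<lambda>N. sigmaC_set X (X frontier_of N)) x"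
      by (rule nbhd_basis_mono) (rule countable_sigmaC[OF assms(4) t1 _ frontier_of_subset_topspace])
    then show False using R1[OF x] by blast
  qed
  show ?thesis unfolding nowhere_rim_sigmaC_def nowhere_rim_sigma_compact_def nowhere_rational_def
    using R1 R2 R3 by blast
qed

end
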